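(* Let $\boldsymbol{A}\in\mathsf{PSL}$ be finite. Then $\boldsymbol{A}^+$ is the $\langle\land,\lnot,0,1\rangle$-reduct of a Heyting algebra, $\boldsymbol{A}^+\in\mathsf{PSL}$, and the map $\epsilon_{\boldsymbol{A}}\colon\boldsymbol{A}\to\boldsymbol{A}^+$ is an embedding.
   Context: $\mathsf{PSL}$ is the class of pseudocomplemented semilattices $\langle A;\land,\lnot,0,1\rangle$: $\langle A;\land\rangle$ is a semilattice (order $a\le b$ iff $a\land b=a$) with minimum $0$ and maximum $1$, and $c\land a=0\iff c\le\lnot a$. An element $a$ of a semilattice is join irreducible if it is not the minimum and, whenever $a=b\lor c$ for some $b,c$ whose join exists, $a=b$ or $a=c$; $\mathsf{J}(\boldsymbol{A})$ is the subposet of join irreducible elements. For finite $\boldsymbol{A}$, $\boldsymbol{A}^+=\langle\mathsf{Dw}(\mathsf{J}(\boldsymbol{A}));\cap,\lnot,\emptyset,\mathsf{J}(\boldsymbol{A})\rangle$, where $\mathsf{Dw}(\mathsf{J}(\boldsymbol{A}))$ is the set of downsets of $\mathsf{J}(\boldsymbol{A})$ and $\lnot D=\{a\in\mathsf{J}(\boldsymbol{A}): D\cap{\downarrow}a=\emptyset\}$; and $\epsilon_{\boldsymbol{A}}(a)=\mathsf{J}(\boldsymbol{A})\cap{\downarrow}a$. *)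

theory Defs
  imports Main
begin

definition leq :: "('a \<Rightarrow> 'a \<Rightarrow> 'a) \<Rightarrow> 'a \<Rightarrow> 'a \<Rightarrow> bool" where
  "leq m a b \<longleftrightarrow> m a b = a"

definition psl :: "'a set \<Rightarrow> ('a \<Rightarrow> 'a \<Rightarrow> 'a) \<Rightarrow> ('a \<Rightarrow> 'a) \<Rightarrow> 'a \<Rightarrow> 'a \<Rightarrow> bool" where
  "psl A m n z u \<longleftrightarrow>
     z \<in> A \<and> u \<in> A \<and>
     (\<forall>a\<in>A. \<forall>b\<in>A. m a b \<in> A) \<and> (\<forall>a\<in>A. n a \<in> A) \<and>
     (\<forall>a\<in>A. \<forall>b\<in>A. \<forall>c\<in>A. m (m a b) c = m a (m b c)) \<and>
     (\<forall>a\<in>A. \<forall>b\<in>A. m a b = m b a) \<and>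
     (\<forall>a\<in>A. m a a = a) \<and>
     (\<forall>a\<in>A. leq m z a \<and> leq m a u) \<and>
     (\<forall>a\<in>A. \<forall>c\<in>A. m c a = z \<longleftrightarrow> leq m c (n a))"

definition heyting :: "'a set \<Rightarrow> ('a \<Rightarrow> 'a \<Rightarrow> 'a) \<Rightarrow> ('a \<Rightarrow> 'a \<Rightarrow> 'a) \<Rightarrow> ('a \<Rightarrow> 'a \<Rightarrow> 'a)
     \<Rightarrow> 'a \<Rightarrow> 'a \<Rightarrow> bool" where
  "heyting H m j i z u \<longleftrightarrow>
     z \<in> H \<and> u \<in> H \<and>
     (\<forall>a\<in>H. \<forall>b\<in>H. m a b \<in> H \<and> j a b \<in> H \<and> i a b \<in> H) \<and>
     (\<forall>a\<in>H. \<forall>b\<in>H. \<forall>c\<in>H. m (m a b) c = m a (m b c) \<and> j (j a b) c = j a (j b c)) \<and>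
     (\<forall>a\<in>H. \<forall>b\<in>H. m a b = m b a \<and> j a b = j b a) \<and>
     (\<forall>a\<in>H. \<forall>b\<in>H. m a (j a b) = a \<and> j a (m a b) = a) \<and>
     (\<forall>a\<in>H. m z a = z \<and> m u a = a) \<and>
     (\<forall>a\<in>H. \<forall>b\<in>H. \<forall>c\<in>H. leq m (m c a) b \<longleftrightarrow> leq m c (i a b))"

definition is_join :: "'a set \<Rightarrow> ('a \<Rightarrow> 'a \<Rightarrow> 'a) \<Rightarrow> 'a \<Rightarrow> 'a \<Rightarrow> 'a \<Rightarrow> bool" where
  "is_join A m b c d \<longleftrightarrow> d \<in> A \<and> leq m b d \<and> leq m c d \<and>
     (\<forall>e\<in>A. leq m b e \<and> leq m c e \<longrightarrow> leq m d e)"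

definition JI :: "'a set \<Rightarrow> ('a \<Rightarrow> 'a \<Rightarrow> 'a) \<Rightarrow> 'a \<Rightarrow> 'a set" where
  "JI A m z = {a \<in> A. a \<noteq> z \<and>
      (\<forall>b\<in>A. \<forall>c\<in>A. is_join A m b c a \<longrightarrow> a = b \<or> a = c)}"

definition downsets :: "'a set \<Rightarrow> ('a \<Rightarrow> 'a \<Rightarrow> 'a) \<Rightarrow> 'a set \<Rightarrow> 'a set set" where
  "downsets A m J = {D. D \<subseteq> J \<and> (\<forall>x\<in>D. \<forall>y\<in>J. leq m y x \<longrightarrow> y \<in> D)}"

definition down :: "'a set \<Rightarrow> ('a \<Rightarrow> 'a \<Rightarrow> 'a) \<Rightarrow> 'a \<Rightarrow> 'a set" where
  "down A m a = {b \<in> A. leq m b a}"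

definition plus_neg :: "'a set \<Rightarrow> ('a \<Rightarrow> 'a \<Rightarrow> 'a) \<Rightarrow> 'a \<Rightarrow> 'a set \<Rightarrow> 'a set" where
  "plus_neg A m z D = {a \<in> JI A m z. D \<inter> down A m a = {}}"

definition eps :: "'a set \<Rightarrow> ('a \<Rightarrow> 'a \<Rightarrow> 'a) \<Rightarrow> 'a \<Rightarrow> 'a \<Rightarrow> 'a set" where
  "eps A m z a = JI A m z \<inter> down A m a"

end

theory Submission
  imports Defs
begin

lemma psl_facts:
  assumes "psl A m n z u"
  shows "z \<in> A" "u \<in> A" "\<And>a b. a\<in>A \<Longrightarrow> b\<in>A \<Longrightarrow> m a b \<in> A"
    "\<And>a. a\<in>A \<Longrightarrow> n a \<in> A"
    "\<And>a b c. a\<in>A \<Longrightarrow> b\<in>A \<Longrightarrow> c\<in>A \<Longrightarrow> m (m a b) c = m a (m b c)"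
    "\<And>a b. a\<in>A \<Longrightarrow> b\<in>A \<Longrightarrow> m a b = m b a"
    "\<And>a. a\<in>A \<Longrightarrow> m a a = a"
    "\<And>a. a\<in>A \<Longrightarrow> leq m z a" "\<And>a. a\<in>A \<Longrightarrow> leq m a u"
    "\<And>a c. a\<in>A \<Longrightarrow> c\<in>A \<Longrightarrow> m c a = z \<longleftrightarrow> leq m c (n a)"
  using assms unfolding psl_def by blast+

lemma leq_refl: "psl A m n z u \<Longrightarrow> a \<in> A \<Longrightarrow> leq m a a"
  using psl_facts(7)[of A m n z u a] unfolding leq_def by blast

lemma leq_trans: "psl A m n z u \<Longrightarrow> a \<in> A \<Longrightarrow> b \<in> A \<Longrightarrow> c \<in> A \<Longrightarrow> leq m a b \<Longrightarrow> leq m b c \<Longrightarrow> leq m a c"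
proof -
  assume P: "psl A m n z u" and h: "a \<in> A" "b \<in> A" "c \<in> A" "leq m a b" "leq m b c"
  have "m a c = m (m a b) c" using h(4) unfolding leq_def by simp
  also have "\<dots> = m a (m b c)" using psl_facts(5)[OF P h(1-3)] .
  also have "\<dots> = a" using h(4,5) unfolding leq_def by simp
  finally show ?thesis unfolding leq_def .
qed

lemma leq_antisym: "psl A m n z u \<Longrightarrow> a \<in> A \<Longrightarrow> b \<in> A \<Longrightarrow> leq m a b \<Longrightarrow> leq m b a \<Longrightarrow> a = b"
proof -
  assume P: "psl A m n z u" and h: "a \<in> A" "b \<in> A" "leq m a b" "leq m b a"
  have "a = m a b" using h(3) unfolding leq_def by simp
  also have "\<dots> = m b a" using psl_facts(6)[OF P h(1,2)] .
  also have "\<dots> = b" using h(4) unfolding leq_def by simp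
  finally show ?thesis .
qed

lemma leq_meet: "psl A m n z u \<Longrightarrow> a \<in> A \<Longrightarrow> b \<in> A \<Longrightarrow> x \<in> A \<Longrightarrow>
   leq m x (m a b) \<longleftrightarrow> leq m x a \<and> leq m x b"
proof -
  assume P: "psl A m n z u" and a: "a \<in> A" and b: "b \<in> A" and x: "x \<in> A"
  note f = psl_facts[OF P]
  show ?thesis
  proof
    assume h: "leq m x (m a b)"
    have "m (m a b) a = m a (m a b)" using f(6)[OF f(3)[OF a b] a] .
    also have "\<dots> = m (m a a) b" using f(5)[OF a a b] by simp
    finally have "leq m (m a b) a" unfolding leq_def using f(7) a by simp
    moreover have "m (m a b) b = m a (m b b)" using f(5)[OF a b b] by simp
    then have "leq m (m a b) b" unfolding leq_def using f(7) b by simp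
    ultimately show "leq m x a \<and> leq m x b" using leq_trans[OF P x f(3)[OF a b] a h] leq_trans[OF P x f(3)[OF a b] b h] by blast
  next
    assume "leq m x a \<and> leq m x b"
    then have "m x a = x" "m x b = x" unfolding leq_def by auto
    then have "m x (m a b) = x" using f(5)[OF x a b] by simp
    then show "leq m x (m a b)" unfolding leq_def .
  qed
qed

lemma JI_sub: "JI A m z \<subseteq> A" unfolding JI_def by auto

lemma key:
  assumes P: "psl A m n z u" and fin: "finite A" and a: "a \<in> A" and b: "b \<in> A"
    and nle: "\<not> leq m a b"
  shows "\<exists>x\<in>JI A m z. leq m x a \<and> \<not> leq m x b"
proof -
  note f = psl_facts[OF P]
  define S where "S = {c\<in>A. leq m c a \<and> \<not> leq m c b}"
  have "a \<in> S" using S_def a nle leq_refl[OF P a] by auto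
  then obtain c where cS: "c \<in> S" and cmin: "\<forall>d. d \<in> S \<longrightarrow> card (down A m c) \<le> card (down A m d)"
    using ex_has_least_nat[of "\<lambda>c. c \<in> S" a "\<lambda>c. card (down A m c)"] by blast
  have cA: "c \<in> A" and ca: "leq m c a" and cb: "\<not> leq m c b" using cS S_def by auto
  have minimal: "d = c" if dA: "d \<in> A" and dc: "leq m d c" and db: "\<not> leq m d b" for d
  proof (rule ccontr)
    assume ne: "d \<noteq> c"
    have "d \<in> S" using S_def dA db leq_trans[OF P dA cA a dc ca] by auto
    have sub: "down A m d \<subseteq> down A m c" unfolding down_def using leq_trans[OF P _ dA cA _ dc] by auto
    have "c \<notin> down A m d" unfolding down_def using leq_antisym[OF P dA cA dc] ne by auto
    moreover have "c \<in> down A m c" unfolding down_def using cA leq_refl[OF P cA] by auto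
    ultimately have "down A m d \<subset> down A m c" using sub by auto
    moreover have "finite (down A m c)" unfolding down_def using fin by auto
    ultimately have "card (down A m d) < card (down A m c)" by (rule psubset_card_mono[rotated])
    with cmin \<open>d \<in> S\<close> show False by fastforce
  qed
  have "c \<in> JI A m z"
    unfolding JI_def
  proof (intro CollectI conjI ballI impI cA)
    show "c \<noteq> z" using cb f(8)[OF b] by auto
  next
    fix d e assume dA: "d \<in> A" and eA: "e \<in> A" and j: "is_join A m d e c"
    show "c = d \<or> c = e"
    proof (rule ccontr)
      assume "\<not> (c = d \<or> c = e)"
      then have "leq m d b" "leq m e b" using minimal j dA eA unfolding is_join_def by auto
      then show False using j b cb unfolding is_join_def by auto
    qed
  qed
  then show ?thesis using ca cb by blast
qed


definition impl :: "'a set \<Rightarrow> ('a \<Rightarrow> 'a \<Rightarrow> 'a) \<Rightarrow> 'a \<Rightarrow> 'a set \<Rightarrow> 'a set \<Rightarrow> 'a set" where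
  "impl A m z D E = {a \<in> JI A m z. \<forall>b\<in>JI A m z. leq m b a \<longrightarrow> b \<in> D \<longrightarrow> b \<in> E}"

lemma impl_in:
  assumes P: "psl A m n z u"
  shows "impl A m z D E \<in> downsets A m (JI A m z)"
  unfolding downsets_def
proof (intro CollectI conjI ballI impI)
  show "impl A m z D E \<subseteq> JI A m z" unfolding impl_def by blast
next
  fix x y assume x: "x \<in> impl A m z D E"
    and y: "y \<in> JI A m z" and yx: "leq m y x"
  have xJ: "x \<in> JI A m z" and xb: "\<forall>b\<in>JI A m z. leq m b x \<longrightarrow> b \<in> D \<longrightarrow> b \<in> E"
    using x unfolding impl_def by auto
  have xA: "x \<in> A" "y \<in> A" using xJ y JI_sub[of A m z] by auto
  have "\<forall>b\<in>JI A m z. leq m b y \<longrightarrow> b \<in> D \<longrightarrow> b \<in> E"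
  proof (intro ballI impI)
    fix b assume b: "b \<in> JI A m z" and bly: "leq m b y" and bD: "b \<in> D"
    have bA: "b \<in> A" using b JI_sub[of A m z] by auto
    have "leq m b x" using leq_trans[OF P bA xA(2) xA(1) bly yx] .
    then show "b \<in> E" using xb b bD by blast
  qed
  then show "y \<in> impl A m z D E" unfolding impl_def using y by blast
qed

lemma resid:
  assumes P: "psl A m n z u" and C: "C \<in> downsets A m (JI A m z)"
  shows "C \<inter> D \<subseteq> E \<longleftrightarrow> C \<subseteq> impl A m z D E"
proof
  assume h: "C \<inter> D \<subseteq> E"
  have Cd: "C \<subseteq> JI A m z" "\<forall>x\<in>C. \<forall>y\<in>JI A m z. leq m y x \<longrightarrow> y \<in> C"
    using C unfolding downsets_def by auto
  show "C \<subseteq> impl A m z D E"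
  proof
    fix x assume x: "x \<in> C"
    have "\<forall>b\<in>JI A m z. leq m b x \<longrightarrow> b \<in> D \<longrightarrow> b \<in> E"
      using Cd(2) x h by blast
    then show "x \<in> impl A m z D E" unfolding impl_def using Cd(1) x by blast
  qed
next
  assume h: "C \<subseteq> impl A m z D E"
  show "C \<inter> D \<subseteq> E"
  proof
    fix x assume x: "x \<in> C \<inter> D"
    then have xJ: "x \<in> JI A m z" using C unfolding downsets_def by auto
    then have "x \<in> A" using JI_sub[of A m z] by blast
    then have "leq m x x" using leq_refl[OF P] by blast
    moreover have "\<forall>b\<in>JI A m z. leq m b x \<longrightarrow> b \<in> D \<longrightarrow> b \<in> E"
      using h x unfolding impl_def by blast
    ultimately show "x \<in> E" using x xJ by blast
  qed
qed

lemma neg_impl: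
  assumes C: "D \<in> downsets A m (JI A m z)"
  shows "plus_neg A m z D = impl A m z D {}"
proof -
  have D: "D \<subseteq> JI A m z" "D \<subseteq> A" using C JI_sub[of A m z] unfolding downsets_def by blast+
  show ?thesis unfolding impl_def plus_neg_def down_def using D by blast
qed

theorem lemma5p8:
  fixes A :: "'a set" and m :: "'a \<Rightarrow> 'a \<Rightarrow> 'a" and n :: "'a \<Rightarrow> 'a" and z u :: 'a
  assumes "psl A m n z u" and "finite A"
  defines "Ap \<equiv> downsets A m (JI A m z)"
  shows "(\<exists>j i. heyting Ap (\<inter>) j i {} (JI A m z) \<and>
                (\<forall>D\<in>Ap. plus_neg A m z D = i D {}))
     \<and> psl Ap (\<inter>) (plus_neg A m z) {} (JI A m z)
     \<and> (\<forall>a\<in>A. eps A m z a \<in> Ap)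
     \<and> inj_on (eps A m z) A
     \<and> (\<forall>a\<in>A. \<forall>b\<in>A. eps A m z (m a b) = eps A m z a \<inter> eps A m z b)
     \<and> (\<forall>a\<in>A. eps A m z (n a) = plus_neg A m z (eps A m z a))
     \<and> eps A m z z = {}
     \<and> eps A m z u = JI A m z"
proof -
  note P = assms(1)
  note f = psl_facts[OF P]
  let ?J = "JI A m z"
  have JA: "?J \<subseteq> A" by (rule JI_sub)
  have subJ: "D \<subseteq> ?J" if "D \<in> Ap" for D using that unfolding Ap_def downsets_def by auto
  have empty_in: "{} \<in> Ap" unfolding Ap_def downsets_def by auto
  have J_in: "?J \<in> Ap" unfolding Ap_def downsets_def by auto
  have int_in: "C \<inter> D \<in> Ap" if "C \<in> Ap" "D \<in> Ap" for C D
    using that unfolding Ap_def downsets_def by blast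
  have un_in: "C \<union> D \<in> Ap" if "C \<in> Ap" "D \<in> Ap" for C D
    using that unfolding Ap_def downsets_def by blast
  have imp_in: "impl A m z C D \<in> Ap" for C D using impl_in[OF P] unfolding Ap_def .
  have negeq: "plus_neg A m z D = impl A m z D {}" if "D \<in> Ap" for D
    using that unfolding Ap_def by (rule neg_impl)
  have leqI: "leq (\<inter>) X Y \<longleftrightarrow> X \<subseteq> Y" for X Y :: "'a set" unfolding leq_def by blast
  have H: "heyting Ap (\<inter>) (\<union>) (impl A m z) {} ?J"
    unfolding heyting_def leqI
  proof (intro conjI ballI)
    fix a b c assume a: "a \<in> Ap" and b: "b \<in> Ap" and c: "c \<in> Ap"
    show "c \<inter> a \<subseteq> b \<longleftrightarrow> c \<subseteq> impl A m z a b"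
      using resid[OF P c[unfolded Ap_def]] .
  qed (use empty_in J_in int_in un_in imp_in subJ in \<open>auto simp: Int_absorb1 subJ\<close>)
  have PS: "psl Ap (\<inter>) (plus_neg A m z) {} ?J"
    unfolding psl_def leqI
  proof (intro conjI ballI)
    fix a c assume a: "a \<in> Ap" and c: "c \<in> Ap"
    have "c \<inter> a = {} \<longleftrightarrow> c \<inter> a \<subseteq> {}" by blast
    also have "\<dots> \<longleftrightarrow> c \<subseteq> impl A m z a {}" using resid[OF P c[unfolded Ap_def]] .
    finally show "c \<inter> a = {} \<longleftrightarrow> c \<subseteq> plus_neg A m z a" using negeq[OF a] by simp
  qed (use empty_in J_in int_in imp_in negeq subJ in auto)
  have eps_in: "eps A m z a \<in> Ap" if a: "a \<in> A" for a
    unfolding Ap_def downsets_def eps_def down_def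
  proof (intro CollectI conjI ballI impI)
    fix x y assume x: "x \<in> ?J \<inter> {b \<in> A. leq m b a}" and y: "y \<in> ?J" and yx: "leq m y x"
    have "y \<in> A" using y JA by auto
    then show "y \<in> ?J \<inter> {b \<in> A. leq m b a}"
      using x y yx leq_trans[OF P _ _ a yx] by blast
  next
    show "?J \<inter> {b \<in> A. leq m b a} \<subseteq> ?J" by blast
  qed
  have eps_mem: "x \<in> eps A m z a \<longleftrightarrow> x \<in> ?J \<and> leq m x a" for x a
    unfolding eps_def down_def using JA by auto
  have inj: "inj_on (eps A m z) A"
  proof (rule inj_onI)
    fix a b assume a: "a \<in> A" and b: "b \<in> A" and e: "eps A m z a = eps A m z b"
    have "leq m a b"
    proof (rule ccontr)
      assume "\<not> leq m a b"
      from key[OF P assms(2) a b this] obtain x where "x \<in> ?J" "leq m x a" "\<not> leq m x b" by blast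
      then have "x \<in> eps A m z a" using eps_mem[of x a] by simp
      then have "x \<in> eps A m z b" using e by simp
      then show False using eps_mem[of x b] \<open>\<not> leq m x b\<close> by simp
    qed
    moreover have "leq m b a"
    proof (rule ccontr)
      assume "\<not> leq m b a"
      from key[OF P assms(2) b a this] obtain x where "x \<in> ?J" "leq m x b" "\<not> leq m x a" by blast
      then have "x \<in> eps A m z b" using eps_mem[of x b] by simp
      then have "x \<in> eps A m z a" using e by simp
      then show False using eps_mem[of x a] \<open>\<not> leq m x a\<close> by simp
    qed
    ultimately show "a = b" using leq_antisym[OF P a b] by blast
  qed
  have meet: "eps A m z (m a b) = eps A m z a \<inter> eps A m z b" if a: "a \<in> A" and b: "b \<in> A" for a b
  proof (rule set_eqI)
    fix x
    show "x \<in> eps A m z (m a b) \<longleftrightarrow> x \<in> eps A m z a \<inter> eps A m z b"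
    proof (cases "x \<in> ?J")
      case True
      then have xA: "x \<in> A" using JA by auto
      show ?thesis using leq_meet[OF P a b xA] eps_mem[of x] True by simp
    next
      case False
      then show ?thesis using eps_mem[of x] by simp
    qed
  qed
  have zJ: "y \<noteq> z" if "y \<in> ?J" for y using that unfolding JI_def by auto
  have neg: "eps A m z (n a) = plus_neg A m z (eps A m z a)" if a: "a \<in> A" for a
  proof (rule set_eqI)
    fix x
    show "x \<in> eps A m z (n a) \<longleftrightarrow> x \<in> plus_neg A m z (eps A m z a)"
    proof (cases "x \<in> ?J")
      case False then show ?thesis using eps_mem unfolding plus_neg_def by auto
    next
      case True
      then have xA: "x \<in> A" using JA by auto
      have xa: "m x a \<in> A" using f(3)[OF xA a] .
      have "x \<in> eps A m z (n a) \<longleftrightarrow> m x a = z" using eps_mem True f(10)[OF a xA] by simp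
      also have "\<dots> \<longleftrightarrow> \<not> (\<exists>y\<in>?J. leq m y a \<and> leq m y x)"
      proof
        assume h: "m x a = z"
        show "\<not> (\<exists>y\<in>?J. leq m y a \<and> leq m y x)"
        proof
          assume "\<exists>y\<in>?J. leq m y a \<and> leq m y x"
          then obtain y where y: "y \<in> ?J" "leq m y a" "leq m y x" by blast
          have yA: "y \<in> A" using y JA by auto
          have "leq m y (m x a)" using leq_meet[OF P xA a yA] y by blast
          then have "y = z" using h leq_antisym[OF P yA f(1)] f(8)[OF yA] by simp
          then show False using zJ y by blast
        qed
      next
        assume h: "\<not> (\<exists>y\<in>?J. leq m y a \<and> leq m y x)"
        show "m x a = z"
        proof (rule ccontr)
          assume ne: "m x a \<noteq> z"
          have "\<not> leq m (m x a) z" using ne leq_antisym[OF P xa f(1)] f(8)[OF xa] by blast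
          from key[OF P assms(2) xa f(1) this] obtain y where y: "y \<in> ?J" "leq m y (m x a)" by blast
          have yA: "y \<in> A" using y JA by auto
          have "leq m y x" "leq m y a" using leq_meet[OF P xA a yA] y by blast+
          then show False using h y by blast
        qed
      qed
      also have "\<dots> \<longleftrightarrow> x \<in> plus_neg A m z (eps A m z a)"
        unfolding plus_neg_def down_def eps_def using True JA by blast
      finally show ?thesis .
    qed
  qed
  have ez: "eps A m z z = {}"
  proof -
    have "x \<notin> eps A m z z" for x
    proof
      assume "x \<in> eps A m z z"
      then have x: "x \<in> ?J" "leq m x z" using eps_mem by auto
      then have "x \<in> A" using JA by auto
      then have "x = z" using leq_antisym[OF P _ f(1) x(2)] f(8) by blast
      then show False using zJ x by blast
    qed
    then show ?thesis by blast
  qed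
  have eu: "eps A m z u = ?J" unfolding eps_def down_def using f(9) JA by blast
  have ex: "\<exists>j i. heyting Ap (\<inter>) j i {} ?J \<and> (\<forall>D\<in>Ap. plus_neg A m z D = i D {})"
    apply (rule exI[of _ "(\<union>)"], rule exI[of _ "impl A m z"])
    using H negeq by blast
  show ?thesis
    apply (intro conjI)
           apply (rule ex)
          apply (rule PS)
         apply (simp add: eps_in)
        apply (rule inj)
       apply (simp add: meet)
      apply (simp add: neg)
     apply (rule ez)
    apply (rule eu)
    done
qed

end
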